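(* Let $(M,\varphi,\xi_\alpha,\eta^\alpha,g)$ be an indefinite almost $\mathcal{S}$-manifold. Then for every $\alpha\in\{1,\dots,r\}$ the tensor field $N^{(2)}_\alpha$ vanishes identically, and for any $X,Y\in\Gamma(\mathfrak{D})$ and any $\alpha\in\{1,\dots,r\}$, \[\eta^\alpha([\varphi X,Y])=\eta^\alpha([\varphi Y,X]).\]
   Context: Let $M$ be a smooth manifold of dimension $2n+r$. An indefinite metric $g.f.f$-structure $(\varphi,\xi_\alpha,\eta^\alpha,g)$, $\alpha=1,\dots,r$, on $M$ consists of a $(1,1)$-tensor field $\varphi$ of constant rank with $\varphi^3+\varphi=0$, vector fields $\xi_1,\dots,\xi_r$, $1$-forms $\eta^1,\dots,\eta^r$ and a semi-Riemannian metric $g$ of index $\nu$, $0<\nu<2n+r$, such that $\varphi^2=-I+\sum_\alpha\eta^\alpha\otimes\xi_\alpha$, $\eta^\alpha(\xi_\beta)=\delta^\alpha_\beta$, $g(\varphi X,\varphi Y)=g(X,Y)-\sum_\alpha\varepsilon_\alpha\eta^\alpha(X)\eta^\alpha(Y)$ and $\varepsilon_\alpha g(X,\xi_\alpha)=\eta^\alpha(X)$ for all vector fields $X,Y$, where $\varepsilon_\alpha=g(\xi_\alpha,\xi_\alpha)\in\{1,-1\}$. Put $\mathfrak{D}=\operatorname{Im}\varphi$. The fundamental $2$-form is $\Phi(X,Y)=g(X,\varphi Y)$. The exterior derivative convention is $d\omega(X,Y)=\tfrac12\big(X(\omega(Y))-Y(\omega(X))-\omega([X,Y])\big)$. The manifold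 is an indefinite almost $\mathcal{S}$-manifold if $d\eta^\alpha=\Phi$ for all $\alpha$. For each $\alpha$, $N^{(2)}_\alpha(X,Y)=(\mathcal{L}_{\varphi X}\eta^\alpha)(Y)-(\mathcal{L}_{\varphi Y}\eta^\alpha)(X)=2d\eta^\alpha(\varphi X,Y)-2d\eta^\alpha(\varphi Y,X)$. *)

theory Defs
  imports Complex_Main
begin

(* Smooth functions on M are modelled by a function algebra C of real-valued
   functions on the point type 'p; smooth vector fields are the derivations
   of C (for C = C^infinity(M) these are exactly the vector fields on M). *)

type_synonym 'p fn = "'p \<Rightarrow> real"
type_synonym 'p vf = "'p fn \<Rightarrow> 'p fn"

definition fun_algebra :: "'p fn set \<Rightarrow> bool" where
  "fun_algebra C \<longleftrightarrow> (\<forall>c. (\<lambda>_. c) \<in> C) \<and>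
     (\<forall>f\<in>C. \<forall>h\<in>C. (\<lambda>p. f p + h p) \<in> C \<and> (\<lambda>p. f p * h p) \<in> C)"

definition vector_fields :: "'p fn set \<Rightarrow> 'p vf set" where
  "vector_fields C = {X.
     (\<forall>f\<in>C. X f \<in> C) \<and>
     (\<forall>f. f \<notin> C \<longrightarrow> X f = (\<lambda>_. 0)) \<and>
     (\<forall>f\<in>C. \<forall>h\<in>C. X (\<lambda>p. f p + h p) = (\<lambda>p. X f p + X h p)) \<and>
     (\<forall>c. \<forall>f\<in>C. X (\<lambda>p. c * f p) = (\<lambda>p. c * X f p)) \<and>
     (\<forall>f\<in>C. \<forall>h\<in>C. X (\<lambda>p. f p * h p) = (\<lambda>p. X f p * h p + f p * X h p))}"

definition vf_add :: "'p vf \<Rightarrow> 'p vf \<Rightarrow> 'p vf" where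
  "vf_add X Y = (\<lambda>f p. X f p + Y f p)"

definition vf_smul :: "'p fn \<Rightarrow> 'p vf \<Rightarrow> 'p vf" where
  "vf_smul h X = (\<lambda>f p. h p * X f p)"

definition vf_neg :: "'p vf \<Rightarrow> 'p vf" where
  "vf_neg X = (\<lambda>f p. - X f p)"

definition vf_zero :: "'p vf" where
  "vf_zero = (\<lambda>f p. 0)"

definition lie_bracket :: "'p vf \<Rightarrow> 'p vf \<Rightarrow> 'p vf" where
  "lie_bracket X Y = (\<lambda>f p. X (Y f) p - Y (X f) p)"

definition tensor11 :: "'p fn set \<Rightarrow> ('p vf \<Rightarrow> 'p vf) \<Rightarrow> bool" where
  "tensor11 C \<phi> \<longleftrightarrow> (\<forall>X\<in>vector_fields C. \<phi> X \<in> vector_fields C) \<and>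
     (\<forall>X\<in>vector_fields C. \<forall>Y\<in>vector_fields C. \<phi> (vf_add X Y) = vf_add (\<phi> X) (\<phi> Y)) \<and>
     (\<forall>h\<in>C. \<forall>X\<in>vector_fields C. \<phi> (vf_smul h X) = vf_smul h (\<phi> X))"

definition one_form :: "'p fn set \<Rightarrow> ('p vf \<Rightarrow> 'p fn) \<Rightarrow> bool" where
  "one_form C \<omega> \<longleftrightarrow> (\<forall>X\<in>vector_fields C. \<omega> X \<in> C) \<and>
     (\<forall>X\<in>vector_fields C. \<forall>Y\<in>vector_fields C. \<omega> (vf_add X Y) = (\<lambda>p. \<omega> X p + \<omega> Y p)) \<and>
     (\<forall>h\<in>C. \<forall>X\<in>vector_fields C. \<omega> (vf_smul h X) = (\<lambda>p. h p * \<omega> X p))"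

definition semi_riemannian_indef :: "'p fn set \<Rightarrow> ('p vf \<Rightarrow> 'p vf \<Rightarrow> 'p fn) \<Rightarrow> bool" where
  "semi_riemannian_indef C g \<longleftrightarrow>
     (\<forall>X\<in>vector_fields C. one_form C (g X)) \<and>
     (\<forall>X\<in>vector_fields C. \<forall>Y\<in>vector_fields C. g X Y = g Y X) \<and>
     (\<forall>X\<in>vector_fields C. (\<forall>Y\<in>vector_fields C. g X Y = (\<lambda>_. 0)) \<longrightarrow> X = vf_zero) \<and>
     (\<exists>X\<in>vector_fields C. \<exists>p. g X X p < 0) \<and>
     (\<exists>X\<in>vector_fields C. \<exists>p. g X X p > 0)"

definition indef_metric_gff ::
  "'p fn set \<Rightarrow> nat \<Rightarrow> ('p vf \<Rightarrow> 'p vf) \<Rightarrow> (nat \<Rightarrow> 'p vf) \<Rightarrow> (nat \<Rightarrow> 'p vf \<Rightarrow> 'p fn)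
    \<Rightarrow> ('p vf \<Rightarrow> 'p vf \<Rightarrow> 'p fn) \<Rightarrow> (nat \<Rightarrow> real) \<Rightarrow> bool" where
  "indef_metric_gff C r \<phi> \<xi> \<eta> g \<epsilon> \<longleftrightarrow>
     fun_algebra C \<and> tensor11 C \<phi> \<and> semi_riemannian_indef C g \<and>
     (\<forall>\<alpha>\<in>{1..r}. \<xi> \<alpha> \<in> vector_fields C \<and> one_form C (\<eta> \<alpha>)) \<and>
     (\<forall>X\<in>vector_fields C. vf_add (\<phi> (\<phi> (\<phi> X))) (\<phi> X) = vf_zero) \<and>
     (\<forall>X\<in>vector_fields C. \<phi> (\<phi> X) =
        (\<lambda>f p. - X f p + (\<Sum>\<alpha>\<in>{1..r}. \<eta> \<alpha> X p * \<xi> \<alpha> f p))) \<and>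
     (\<forall>\<alpha>\<in>{1..r}. \<forall>\<beta>\<in>{1..r}. \<eta> \<alpha> (\<xi> \<beta>) = (\<lambda>_. if \<alpha> = \<beta> then 1 else 0)) \<and>
     (\<forall>X\<in>vector_fields C. \<forall>Y\<in>vector_fields C. g (\<phi> X) (\<phi> Y) =
        (\<lambda>p. g X Y p - (\<Sum>\<alpha>\<in>{1..r}. \<epsilon> \<alpha> * \<eta> \<alpha> X p * \<eta> \<alpha> Y p))) \<and>
     (\<forall>\<alpha>\<in>{1..r}. \<epsilon> \<alpha> \<in> {1, -1} \<and> g (\<xi> \<alpha>) (\<xi> \<alpha>) = (\<lambda>_. \<epsilon> \<alpha>)) \<and>
     (\<forall>\<alpha>\<in>{1..r}. \<forall>X\<in>vector_fields C. (\<lambda>p. \<epsilon> \<alpha> * g X (\<xi> \<alpha>) p) = \<eta> \<alpha> X)"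

definition fund_form :: "('p vf \<Rightarrow> 'p vf) \<Rightarrow> ('p vf \<Rightarrow> 'p vf \<Rightarrow> 'p fn) \<Rightarrow> 'p vf \<Rightarrow> 'p vf \<Rightarrow> 'p fn" where
  "fund_form \<phi> g X Y = g X (\<phi> Y)"

text \<open>exterior derivative of a 1-form, with the factor 1/2 convention\<close>
definition ext_d :: "('p vf \<Rightarrow> 'p fn) \<Rightarrow> 'p vf \<Rightarrow> 'p vf \<Rightarrow> 'p fn" where
  "ext_d \<omega> X Y = (\<lambda>p. (1/2) * (X (\<omega> Y) p - Y (\<omega> X) p - \<omega> (lie_bracket X Y) p))"

definition lie_deriv_form :: "'p vf \<Rightarrow> ('p vf \<Rightarrow> 'p fn) \<Rightarrow> 'p vf \<Rightarrow> 'p fn" where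
  "lie_deriv_form X \<omega> Y = (\<lambda>p. X (\<omega> Y) p - \<omega> (lie_bracket X Y) p)"

definition N2 :: "('p vf \<Rightarrow> 'p vf) \<Rightarrow> (nat \<Rightarrow> 'p vf \<Rightarrow> 'p fn) \<Rightarrow> nat \<Rightarrow> 'p vf \<Rightarrow> 'p vf \<Rightarrow> 'p fn" where
  "N2 \<phi> \<eta> \<alpha> X Y = (\<lambda>p. lie_deriv_form (\<phi> X) (\<eta> \<alpha>) Y p - lie_deriv_form (\<phi> Y) (\<eta> \<alpha>) X p)"

definition indef_almost_S ::
  "'p fn set \<Rightarrow> nat \<Rightarrow> ('p vf \<Rightarrow> 'p vf) \<Rightarrow> (nat \<Rightarrow> 'p vf) \<Rightarrow> (nat \<Rightarrow> 'p vf \<Rightarrow> 'p fn)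
    \<Rightarrow> ('p vf \<Rightarrow> 'p vf \<Rightarrow> 'p fn) \<Rightarrow> (nat \<Rightarrow> real) \<Rightarrow> bool" where
  "indef_almost_S C r \<phi> \<xi> \<eta> g \<epsilon> \<longleftrightarrow> indef_metric_gff C r \<phi> \<xi> \<eta> g \<epsilon> \<and>
     (\<forall>\<alpha>\<in>{1..r}. \<forall>X\<in>vector_fields C. \<forall>Y\<in>vector_fields C.
        ext_d (\<eta> \<alpha>) X Y = fund_form \<phi> g X Y)"

text \<open>sections of D = Im phi\<close>
definition sections_D :: "'p fn set \<Rightarrow> ('p vf \<Rightarrow> 'p vf) \<Rightarrow> 'p vf set" where
  "sections_D C \<phi> = {X \<in> vector_fields C. \<exists>Z\<in>vector_fields C. X = \<phi> Z}"

end

theory Submission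
  imports Defs
begin

lemma vf_zero_in: "fun_algebra C \<Longrightarrow> vf_zero \<in> vector_fields C"
  unfolding vector_fields_def vf_zero_def fun_algebra_def by auto

lemma vf_smul_in:
  assumes C: "fun_algebra C" and h: "h \<in> C" and X: "X \<in> vector_fields C"
  shows "vf_smul h X \<in> vector_fields C"
proof -
  have mul: "\<And>f k. f \<in> C \<Longrightarrow> k \<in> C \<Longrightarrow> (\<lambda>p. f p * k p) \<in> C" using C unfolding fun_algebra_def by auto
  show ?thesis using X h unfolding vector_fields_def vf_smul_def
    by (auto intro!: mul simp: algebra_simps fun_eq_iff)
qed

lemma vf_add_in:
  assumes C: "fun_algebra C" and X: "X \<in> vector_fields C" and Y: "Y \<in> vector_fields C"
  shows "vf_add X Y \<in> vector_fields C"
proof -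
  have add: "\<And>f k. f \<in> C \<Longrightarrow> k \<in> C \<Longrightarrow> (\<lambda>p. f p + k p) \<in> C" using C unfolding fun_algebra_def by auto
  show ?thesis using X Y unfolding vector_fields_def vf_add_def
    by (auto intro!: add simp: algebra_simps fun_eq_iff)
qed

lemma form_zero:
  assumes C: "fun_algebra C" and w: "one_form C \<omega>"
  shows "\<omega> vf_zero = (\<lambda>_. 0)"
proof -
  have z: "vf_zero \<in> vector_fields C" using vf_zero_in[OF C] .
  have "vf_add vf_zero vf_zero = (vf_zero :: 'a vf)" unfolding vf_add_def vf_zero_def by simp
  then have "\<omega> vf_zero = (\<lambda>p. \<omega> vf_zero p + \<omega> vf_zero p)"
    using w z unfolding one_form_def by metis
  then show ?thesis by (auto simp: fun_eq_iff dest: fun_cong)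
qed

lemma vf_const0:
  assumes C: "fun_algebra C" and X: "X \<in> vector_fields C"
  shows "X (\<lambda>_. 0) = (\<lambda>_. 0)"
proof -
  have c: "(\<lambda>_. 0::real) \<in> C" using C unfolding fun_algebra_def by auto
  have "\<forall>c. \<forall>f\<in>C. X (\<lambda>p. c * f p) = (\<lambda>p. c * X f p)"
    using X unfolding vector_fields_def by blast
  then have h: "\<And>f. f \<in> C \<Longrightarrow> X (\<lambda>p. 0 * f p) = (\<lambda>p. 0 * X f p)" by blast
  show ?thesis using h[OF c] by simp
qed

lemma sum_form:
  assumes C: "fun_algebra C" and w: "one_form C \<omega>" and fin: "finite A"
    and h: "\<forall>a\<in>A. h a \<in> C" and xi: "\<forall>a\<in>A. \<xi> a \<in> vector_fields C"
  shows "(\<lambda>f p. \<Sum>a\<in>A. h a p * \<xi> a f p) \<in> vector_fields C \<and>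
         \<omega> (\<lambda>f p. \<Sum>a\<in>A. h a p * \<xi> a f p) = (\<lambda>p. \<Sum>a\<in>A. h a p * \<omega> (\<xi> a) p)"
  using fin h xi
proof (induction A rule: finite_induct)
  case empty
  have e: "(\<lambda>f p. \<Sum>a\<in>{}. h a p * \<xi> a f p) = vf_zero" unfolding vf_zero_def by simp
  show ?case unfolding e using vf_zero_in[OF C] form_zero[OF C w] by simp
next
  case (insert x F)
  let ?S = "\<lambda>f p. \<Sum>a\<in>F. h a p * \<xi> a f p"
  have IH1: "?S \<in> vector_fields C" and IH2: "\<omega> ?S = (\<lambda>p. \<Sum>a\<in>F. h a p * \<omega> (\<xi> a) p)"
    using insert.IH insert.prems by auto
  have hx: "h x \<in> C" and xx: "\<xi> x \<in> vector_fields C" using insert.prems by auto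
  have sm: "vf_smul (h x) (\<xi> x) \<in> vector_fields C" using vf_smul_in[OF C hx xx] .
  have eq: "(\<lambda>f p. \<Sum>a\<in>insert x F. h a p * \<xi> a f p) = vf_add (vf_smul (h x) (\<xi> x)) ?S"
    using insert(1,2) unfolding vf_add_def vf_smul_def by (simp add: fun_eq_iff)
  have wa: "\<forall>X\<in>vector_fields C. \<forall>Y\<in>vector_fields C. \<omega> (vf_add X Y) = (\<lambda>p. \<omega> X p + \<omega> Y p)"
    and ws: "\<forall>h\<in>C. \<forall>X\<in>vector_fields C. \<omega> (vf_smul h X) = (\<lambda>p. h p * \<omega> X p)"
    using w unfolding one_form_def by auto
  have A: "\<omega> (vf_add (vf_smul (h x) (\<xi> x)) ?S) = (\<lambda>p. \<omega> (vf_smul (h x) (\<xi> x)) p + \<omega> ?S p)"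
    using wa sm IH1 by blast
  have B: "\<omega> (vf_smul (h x) (\<xi> x)) = (\<lambda>p. h x p * \<omega> (\<xi> x) p)"
    using ws hx xx by blast
  have V: "vf_add (vf_smul (h x) (\<xi> x)) ?S \<in> vector_fields C" using vf_add_in[OF C sm IH1] .
  have "\<omega> (\<lambda>f p. \<Sum>a\<in>insert x F. h a p * \<xi> a f p) = (\<lambda>p. \<Sum>a\<in>insert x F. h a p * \<omega> (\<xi> a) p)"
    unfolding eq A B IH2 using insert(1,2) by simp
  then show ?case using V unfolding eq by simp
qed

lemma gffD:
  assumes "indef_metric_gff C r \<phi> \<xi> \<eta> g \<epsilon>"
  shows "fun_algebra C" and "tensor11 C \<phi>" and "semi_riemannian_indef C g"
    and "\<forall>\<alpha>\<in>{1..r}. \<xi> \<alpha> \<in> vector_fields C \<and> one_form C (\<eta> \<alpha>)"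
    and "\<forall>X\<in>vector_fields C. vf_add (\<phi> (\<phi> (\<phi> X))) (\<phi> X) = vf_zero"
    and "\<forall>X\<in>vector_fields C. \<phi> (\<phi> X) =
        (\<lambda>f p. - X f p + (\<Sum>\<alpha>\<in>{1..r}. \<eta> \<alpha> X p * \<xi> \<alpha> f p))"
    and "\<forall>\<alpha>\<in>{1..r}. \<forall>\<beta>\<in>{1..r}. \<eta> \<alpha> (\<xi> \<beta>) = (\<lambda>_. if \<alpha> = \<beta> then 1 else 0)"
  using assms unfolding indef_metric_gff_def by blast+

lemma eta_phi_zero:
  assumes S: "indef_metric_gff C r \<phi> \<xi> \<eta> g \<epsilon>" and b: "\<beta> \<in> {1..r}"
    and X: "X \<in> vector_fields C"
  shows "\<eta> \<beta> (\<phi> X) = (\<lambda>_. 0)"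
proof -
  have C: "fun_algebra C" and T: "tensor11 C \<phi>" using gffD[OF S] by auto
  have PX: "\<phi> X \<in> vector_fields C" using T X unfolding tensor11_def by auto
  have PPX: "\<phi> (\<phi> X) \<in> vector_fields C" using T PX unfolding tensor11_def by auto
  have cube: "vf_add (\<phi> (\<phi> (\<phi> X))) (\<phi> X) = vf_zero" using gffD(5)[OF S] X by blast
  have sq: "\<phi> (\<phi> (\<phi> X)) = (\<lambda>f p. - \<phi> X f p + (\<Sum>\<alpha>\<in>{1..r}. \<eta> \<alpha> (\<phi> X) p * \<xi> \<alpha> f p))"
    using gffD(6)[OF S] PX by blast
  have Z: "(\<lambda>f p. \<Sum>\<alpha>\<in>{1..r}. \<eta> \<alpha> (\<phi> X) p * \<xi> \<alpha> f p) = vf_zero"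
  proof -
    have "\<And>f p. vf_add (\<phi> (\<phi> (\<phi> X))) (\<phi> X) f p = 0" using cube unfolding vf_zero_def by simp
    then show ?thesis unfolding sq vf_add_def vf_zero_def by (simp add: fun_eq_iff)
  qed
  have w: "one_form C (\<eta> \<beta>)" using gffD(4)[OF S] b by blast
  have hC: "\<forall>a\<in>{1..r}. \<eta> a (\<phi> X) \<in> C" using gffD(4)[OF S] PX unfolding one_form_def by blast
  have xi: "\<forall>a\<in>{1..r}. \<xi> a \<in> vector_fields C" using gffD(4)[OF S] by blast
  have "\<eta> \<beta> vf_zero = (\<lambda>p. \<Sum>a\<in>{1..r}. \<eta> a (\<phi> X) p * \<eta> \<beta> (\<xi> a) p)"
    using sum_form[OF C w _ hC xi] Z by simp
  also have "\<dots> = (\<lambda>p. \<Sum>a\<in>{1..r}. if a = \<beta> then \<eta> a (\<phi> X) p else 0)"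
    using gffD(7)[OF S] b by (intro ext sum.cong) auto
  also have "\<dots> = \<eta> \<beta> (\<phi> X)" using b by (simp add: sum.delta)
  finally show ?thesis using form_zero[OF C w] by simp
qed

theorem mainTheorem1:
  fixes C :: "'p fn set" and r :: nat and \<phi> :: "'p vf \<Rightarrow> 'p vf"
    and \<xi> :: "nat \<Rightarrow> 'p vf" and \<eta> :: "nat \<Rightarrow> 'p vf \<Rightarrow> 'p fn"
    and g :: "'p vf \<Rightarrow> 'p vf \<Rightarrow> 'p fn" and \<epsilon> :: "nat \<Rightarrow> real"
  assumes "indef_almost_S C r \<phi> \<xi> \<eta> g \<epsilon>"
  shows "(\<forall>\<alpha>\<in>{1..r}. \<forall>X\<in>vector_fields C. \<forall>Y\<in>vector_fields C. N2 \<phi> \<eta> \<alpha> X Y = (\<lambda>_. 0))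
       \<and> (\<forall>X\<in>sections_D C \<phi>. \<forall>Y\<in>sections_D C \<phi>. \<forall>\<alpha>\<in>{1..r}.
            \<eta> \<alpha> (lie_bracket (\<phi> X) Y) = \<eta> \<alpha> (lie_bracket (\<phi> Y) X))"
proof -
  have S: "indef_metric_gff C r \<phi> \<xi> \<eta> g \<epsilon>" using assms unfolding indef_almost_S_def by blast
  have dS: "\<forall>\<alpha>\<in>{1..r}. \<forall>X\<in>vector_fields C. \<forall>Y\<in>vector_fields C.
        ext_d (\<eta> \<alpha>) X Y = fund_form \<phi> g X Y" using assms unfolding indef_almost_S_def by blast
  have C: "fun_algebra C" and T: "tensor11 C \<phi>" and G: "semi_riemannian_indef C g"
    using gffD[OF S] by auto
  have N: "N2 \<phi> \<eta> a X Y = (\<lambda>_. 0)" if a: "a \<in> {1..r}" and X: "X \<in> vector_fields C"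
    and Y: "Y \<in> vector_fields C" for a X Y
  proof -
    have PX: "\<phi> X \<in> vector_fields C" and PY: "\<phi> Y \<in> vector_fields C"
      using T X Y unfolding tensor11_def by auto
    have d1: "ext_d (\<eta> a) (\<phi> X) Y = g (\<phi> X) (\<phi> Y)"
      using dS a PX Y unfolding fund_form_def by blast
    have d2: "ext_d (\<eta> a) (\<phi> Y) X = g (\<phi> Y) (\<phi> X)"
      using dS a PY X unfolding fund_form_def by blast
    have sym: "g (\<phi> X) (\<phi> Y) = g (\<phi> Y) (\<phi> X)" using G PX PY unfolding semi_riemannian_indef_def by blast
    have e1: "Y (\<eta> a (\<phi> X)) = (\<lambda>_. 0)" using eta_phi_zero[OF S a X] vf_const0[OF C Y] by simp
    have e2: "X (\<eta> a (\<phi> Y)) = (\<lambda>_. 0)" using eta_phi_zero[OF S a Y] vf_const0[OF C X] by simp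
    show ?thesis
    proof
      fix p
      have "ext_d (\<eta> a) (\<phi> X) Y p = ext_d (\<eta> a) (\<phi> Y) X p" using d1 d2 sym by simp
      then show "N2 \<phi> \<eta> a X Y p = 0"
        unfolding ext_d_def N2_def lie_deriv_form_def using e1 e2 by (simp add: fun_eq_iff)
    qed
  qed
  moreover have "\<eta> a (lie_bracket (\<phi> X) Y) = \<eta> a (lie_bracket (\<phi> Y) X)"
    if X: "X \<in> sections_D C \<phi>" and Y: "Y \<in> sections_D C \<phi>" and a: "a \<in> {1..r}" for X Y a
  proof -
    obtain Z W where XZ: "X = \<phi> Z" and Z: "Z \<in> vector_fields C" and YW: "Y = \<phi> W"
      and W: "W \<in> vector_fields C" and Xv: "X \<in> vector_fields C" and Yv: "Y \<in> vector_fields C"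
      using X Y unfolding sections_D_def by auto
    have PX: "\<phi> X \<in> vector_fields C" and PY: "\<phi> Y \<in> vector_fields C"
      using T Xv Yv unfolding tensor11_def by auto
    have eX: "\<eta> a X = (\<lambda>_. 0)" using eta_phi_zero[OF S a Z] XZ by simp
    have eY: "\<eta> a Y = (\<lambda>_. 0)" using eta_phi_zero[OF S a W] YW by simp
    have n: "N2 \<phi> \<eta> a X Y = (\<lambda>_. 0)" using N[OF a Xv Yv] .
    show ?thesis
    proof
      fix p
      have "N2 \<phi> \<eta> a X Y p = 0" using n by simp
      then show "\<eta> a (lie_bracket (\<phi> X) Y) p = \<eta> a (lie_bracket (\<phi> Y) X) p"
        unfolding N2_def lie_deriv_form_def eX eY vf_const0[OF C PX] vf_const0[OF C PY] by simp
    qed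
  qed
  ultimately show ?thesis by blast
qed

end
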